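(* For every integer $k\geq 1$, $$G_k(x)=\frac{1+2x\sum_{0\le j\le k-1,\; j\equiv k \pmod 2}C(k,j)4^{j}G_j(x)}{1-2^{k}(2^{k+1}+1)x}.$$ In particular, if $k$ is even then $G_k(x)$ is expressed (with rational-function coefficients, plus a rational function) through $G_0,G_2,\dots,G_{k-2}$ only, and if $k$ is odd then through $G_1,G_3,\dots,G_{k-2}$ only.
   Context: The Stern polynomials $B_n(t)\in\mathbb{Z}[t]$ are defined by $B_0(t)=0$, $B_1(t)=1$, and for $n\geq 1$: $B_{2n}(t)=tB_n(t)$, $B_{2n+1}(t)=B_n(t)+B_{n+1}(t)$. For $n\geq1$ let $e(n)=\deg B_n(t)$. For $k,n\geq 0$ let $S_k(n)=\sum_{a\geq 1:\;e(a)=n}a^{k}$ (a finite sum) and $G_k(x)=\sum_{a=1}^{\infty}a^{k}x^{e(a)}=\sum_{n=0}^{\infty}S_k(n)x^n$. $C(k,j)=\binom{k}{j}$. *)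

theory Defs
  imports "HOL-Computational_Algebra.Computational_Algebra"
begin

text \<open>Stern polynomials: B 0 = 0, B 1 = 1, B (2n) = t B n, B (2n+1) = B n + B (n+1).\<close>
function stern_poly :: "nat \<Rightarrow> int poly" where
  "stern_poly 0 = 0"
| "stern_poly (Suc 0) = 1"
| "stern_poly (Suc (Suc m)) =
     (if even m then [:0, 1:] * stern_poly (Suc (m div 2))
      else stern_poly (Suc (m div 2)) + stern_poly (Suc (Suc (m div 2))))"
  by pat_completeness auto
termination
  by (relation "measure id") (auto elim: oddE)

definition stern_e :: "nat \<Rightarrow> nat" where
  "stern_e n = degree (stern_poly n)"

definition stern_S :: "nat \<Rightarrow> nat \<Rightarrow> nat" where
  "stern_S k n = (\<Sum>a\<in>{a. 1 \<le> a \<and> stern_e a = n}. a ^ k)"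

definition stern_G :: "nat \<Rightarrow> rat fps" where
  "stern_G k = Abs_fps (\<lambda>n. of_nat (stern_S k n))"

end

theory Submission
  imports Defs
begin


abbreviation "B \<equiv> stern_poly"

lemma B_even: "B (2*n) = [:0,1:] * B n"
proof (cases n)
  case (Suc m)
  have "2*n = Suc (Suc (2*m))" using Suc by simp
  then show ?thesis using Suc by simp
qed simp

lemma B_odd: "B (2*n+1) = B n + B (n+1)"
proof (cases n)
  case (Suc m)
  have "2*n+1 = Suc (Suc (2*m+1))" using Suc by simp
  moreover have "(2*m+1) div 2 = m" by simp
  ultimately show ?thesis using Suc by simp
qed simp

lemma B_nonneg: "coeff (B n) i \<ge> 0"
proof (induction n arbitrary: i rule: less_induct)
  case (less n)
  show ?case
  proof (cases "n \<le> 1")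
    case True then show ?thesis by (cases n) (auto simp: coeff_1 le_Suc_eq)
  next
    case False
    define m where "m = n div 2"
    have m: "n = 2*m \<or> n = 2*m+1" "m \<ge> 1" "m < n"
      using False unfolding m_def by presburger+
    show ?thesis
    proof (cases "n = 2*m")
      case True
      then show ?thesis using less m by (cases i) (auto simp: B_even coeff_pCons)
    next
      case False
      then have "n = 2*m+1" using m by auto
      then have "m+1 < n" using m by simp
      moreover have "B n = B m + B (m+1)" using B_odd[of m] `n = 2*m+1` by simp
      ultimately show ?thesis using less m by simp
    qed
  qed
qed

lemma B_pos1: "n \<ge> 1 \<Longrightarrow> poly (B n) 1 > 0"
proof (induction n rule: less_induct)
  case (less n)
  show ?case
  proof (cases "n = 1")
    case True then show ?thesis by simp
  next
    case False
    define m where "m = n div 2"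
    have m: "n = 2*m \<or> n = 2*m+1" "m \<ge> 1" "m < n"
      using False less.prems unfolding m_def by presburger+
    show ?thesis
    proof (cases "n = 2*m")
      case True
      then show ?thesis using less m by (simp add: B_even)
    next
      case False
      then have "n = 2*m+1" using m by auto
      then have "m+1 < n" using m by simp
      moreover have "B n = B m + B (m+1)" using B_odd[of m] `n = 2*m+1` by simp
      ultimately show ?thesis using less m by (simp add: add_pos_pos)
    qed
  qed
qed

lemma B_nz: "n \<ge> 1 \<Longrightarrow> B n \<noteq> 0"
  using B_pos1 by fastforce

lemma deg_add_nonneg:
  fixes p q :: "int poly"
  assumes "\<And>i. coeff p i \<ge> 0" "\<And>i. coeff q i \<ge> 0"
  shows "degree (p+q) = max (degree p) (degree q)"
proof (rule antisym)
  show "degree (p+q) \<le> max (degree p) (degree q)" by (rule degree_add_le_max)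
  have "degree p \<le> degree (p+q)"
  proof (cases "p = 0")
    case False
    then have "coeff p (degree p) > 0" using assms(1)[of "degree p"] leading_coeff_neq_0 by force
    then have "coeff (p+q) (degree p) \<noteq> 0" using assms(2)[of "degree p"] by simp
    then show ?thesis by (rule le_degree)
  qed simp
  moreover have "degree q \<le> degree (p+q)"
  proof (cases "q = 0")
    case False
    then have "coeff q (degree q) > 0" using assms(2)[of "degree q"] leading_coeff_neq_0 by force
    then have "coeff (p+q) (degree q) \<noteq> 0" using assms(1)[of "degree q"] by simp
    then show ?thesis by (rule le_degree)
  qed simp
  ultimately show "max (degree p) (degree q) \<le> degree (p+q)" by simp
qed

abbreviation "e \<equiv> stern_e"

lemma e_even: "n \<ge> 1 \<Longrightarrow> e (2*n) = e n + 1"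
  unfolding stern_e_def using B_nz[of n] by (simp add: B_even degree_mult_eq)

lemma e_odd: "e (2*n+1) = max (e n) (e (n+1))"
  unfolding stern_e_def using B_odd[of n] deg_add_nonneg[OF B_nonneg B_nonneg, of n "n+1"] by simp

lemma e_diff: "e (n+1) \<le> e n + 1 \<and> e n \<le> e (n+1) + 1"
proof (induction n rule: less_induct)
  case (less n)
  define m where "m = n div 2"
  show ?case
  proof (cases "n = 0")
    case True then show ?thesis by (simp add: stern_e_def)
  next
    case False
    show ?thesis
    proof (cases "even n")
      case True
      then have n: "n = 2*m" "m \<ge> 1" "m < n" using False unfolding m_def by auto
      have "e (n+1) = max (e m) (e (m+1))" using e_odd[of m] n by simp
      moreover have "e n = e m + 1" using e_even[of m] n by simp
      ultimately show ?thesis using less[OF n(3)] by auto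
    next
      case odd: False
      then have n: "n = 2*m+1" "m < n" using False unfolding m_def by auto
      have "e n = max (e m) (e (m+1))" using e_odd[of m] n by simp
      moreover have "e (n+1) = e (m+1) + 1" using e_even[of "m+1"] n by (simp add: algebra_simps)
      ultimately show ?thesis using less[OF n(2)] by auto
    qed
  qed
qed

lemma e_4b1: "b \<ge> 1 \<Longrightarrow> e (4*b+1) = e b + 1"
proof -
  assume b: "b \<ge> 1"
  have "e (4*b+1) = max (e (2*b)) (e (2*b+1))" using e_odd[of "2*b"] by (simp add: algebra_simps)
  also have "\<dots> = e b + 1" using e_even[OF b] e_odd[of b] e_diff[of b] by simp
  finally show ?thesis .
qed

lemma e_4b3: "e (4*b+3) = e (b+1) + 1"
proof -
  have eq: "4*b+3 = 2*(2*b+1)+1" by simp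
  have "e (4*b+3) = e (2*(2*b+1)+1)" by (simp only: eq)
  also have "\<dots> = max (e (2*b+1)) (e (2*b+1+1))" by (rule e_odd)
  also have "2*b+1+1 = 2*b+2" by simp
  also have "e (2*b+2) = e (b+1) + 1" using e_even[of "b+1"] by (simp add: algebra_simps)
  also have "max (e (2*b+1)) (e (b+1) + 1) = e (b+1) + 1" using e_odd[of b] e_diff[of b] by simp
  finally show ?thesis .
qed

lemma e_one: "e 1 = 0" by (simp add: stern_e_def)

definition A :: "nat \<Rightarrow> nat set" where "A n = {a. 1 \<le> a \<and> e a = n}"

lemma e_pos: "a \<ge> 2 \<Longrightarrow> e a \<ge> 1"
proof -
  assume a: "a \<ge> 2"
  define b where "b = a div 4"
  have "even a \<or> a = 4*b+1 \<or> a = 4*b+3" unfolding b_def by presburger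
    then consider "even a" | "a = 4*b+1" | "a = 4*b+3" by blast
  then show ?thesis
  proof cases
    case 1
    then obtain c where "a = 2*c" "c \<ge> 1" using a by (auto elim!: evenE)
    then show ?thesis using e_even by simp
  next
    case 2
    then have "b \<ge> 1" using a by simp
    then show ?thesis using e_4b1 2 by simp
  next
    case 3 then show ?thesis using e_4b3 by simp
  qed
qed

lemma A0: "A 0 = {1}"
  unfolding A_def using e_one e_pos by (auto simp: not_less_eq_eq) (metis One_nat_def Suc_1 not_less_eq_eq le_antisym le_zero_eq not_one_le_zero)

lemma ASuc: "A (Suc n) = (\<lambda>b. 2*b) ` A n \<union> (\<lambda>b. 4*b+1) ` A n \<union> (\<lambda>b. 4*b-1) ` A n"
proof
  show "A (Suc n) \<subseteq> (\<lambda>b. 2*b) ` A n \<union> (\<lambda>b. 4*b+1) ` A n \<union> (\<lambda>b. 4*b-1) ` A n"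
  proof
    fix a assume "a \<in> A (Suc n)"
    then have a: "a \<ge> 1" "e a = Suc n" unfolding A_def by auto
    then have "a \<noteq> 1" using e_one by auto
    define b where "b = a div 4"
    have "even a \<or> a = 4*b+1 \<or> a = 4*b+3" unfolding b_def by presburger
    then consider "even a" | "a = 4*b+1" | "a = 4*b+3" by blast
    then show "a \<in> (\<lambda>b. 2*b) ` A n \<union> (\<lambda>b. 4*b+1) ` A n \<union> (\<lambda>b. 4*b-1) ` A n"
    proof cases
      case 1
      then obtain c where c: "a = 2*c" "c \<ge> 1" using a by (auto elim!: evenE)
      then have "c \<in> A n" using e_even[of c] a unfolding A_def by simp
      then show ?thesis using c by blast
    next
      case 2
      then have "b \<ge> 1" using a `a \<noteq> 1` by simp
      then have "b \<in> A n" using e_4b1[of b] a 2 unfolding A_def by simp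
      then show ?thesis using 2 by blast
    next
      case 3
      then have "b+1 \<in> A n" using e_4b3[of b] a unfolding A_def by simp
      moreover have "a = 4*(b+1) - 1" using 3 by simp
      ultimately show ?thesis by blast
    qed
  qed
  show "(\<lambda>b. 2*b) ` A n \<union> (\<lambda>b. 4*b+1) ` A n \<union> (\<lambda>b. 4*b-1) ` A n \<subseteq> A (Suc n)"
  proof (intro Un_least image_subsetI)
    fix b assume "b \<in> A n"
    then have b: "b \<ge> 1" "e b = n" unfolding A_def by auto
    show "2*b \<in> A (Suc n)" using b e_even[of b] unfolding A_def by simp
    show "4*b+1 \<in> A (Suc n)" using b e_4b1[of b] unfolding A_def by simp
    obtain c where c: "b = c+1" using b by (metis add.commute le_Suc_ex)
    have "4*b-1 = 4*c+3" using c by simp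
    then have "e (4*b-1) = Suc n" using e_4b3[of c] c b by (metis Suc_eq_plus1)
    then show "4*b-1 \<in> A (Suc n)" using b unfolding A_def by simp
  qed
qed

lemma A_finite: "finite (A n)"
  by (induction n) (auto simp: A0 ASuc)


lemma S_A: "stern_S k n = (\<Sum>a\<in>A n. a^k)"
  unfolding stern_S_def A_def by simp

lemma binom_pm:
  fixes x :: rat
  shows "(x+1)^k + (x-1)^k = 2 * (\<Sum>j\<in>{j. j \<le> k \<and> j mod 2 = k mod 2}. of_nat (k choose j) * x^j)"
proof -
  have "(x+1)^k + (x-1)^k = (\<Sum>j\<le>k. of_nat (k choose j) * x^j * (1 + (-1)^(k-j)))"
    using binomial_ring[of x 1 k] binomial_ring[of x "-1" k]
    by (simp add: sum.distrib[symmetric] algebra_simps)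
  also have "\<dots> = (\<Sum>j\<le>k. if j \<in> {j. j mod 2 = k mod 2} then 2 * (of_nat (k choose j) * x^j) else 0)"
  proof (rule sum.cong)
    fix j assume "j \<in> {..k}"
    then have "even (k-j) \<longleftrightarrow> j mod 2 = k mod 2" by auto presburger+
    then show "of_nat (k choose j) * x^j * (1 + (-1)^(k-j)) = (if j \<in> {j. j mod 2 = k mod 2} then 2 * (of_nat (k choose j) * x^j) else 0)"
      by (cases "even (k-j)") (auto simp: neg_one_even_power neg_one_odd_power)
  qed simp
  also have "\<dots> = (\<Sum>j\<in>{..k} \<inter> {j. j mod 2 = k mod 2}. 2 * (of_nat (k choose j) * x^j))"
    by (rule sum.inter_restrict[symmetric]) simp
  also have "{..k} \<inter> {j. j mod 2 = k mod 2} = {j. j \<le> k \<and> j mod 2 = k mod 2}" by auto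
  finally show ?thesis by (simp add: sum_distrib_left)
qed

definition J :: "nat \<Rightarrow> nat set" where "J k = {j. j \<le> k - 1 \<and> j mod 2 = k mod 2}"

lemma J_fin: "finite (J k)" unfolding J_def by simp

lemma binom_J:
  fixes x :: rat
  assumes "k \<ge> 1"
  shows "(2*x)^k + (4*x+1)^k + (4*x-1)^k = of_nat (2 ^ k * (2 ^ (k + 1) + 1)) * x^k
     + 2 * (\<Sum>j\<in>J k. of_nat (k choose j) * 4^j * x^j)"
proof -
  have eq: "{j. j \<le> k \<and> j mod 2 = k mod 2} = insert k (J k)" using assms unfolding J_def by auto
  have nk: "k \<notin> J k" using assms unfolding J_def by auto
  have "(4*x+1)^k + (4*x-1)^k = 2 * (\<Sum>j\<in>insert k (J k). of_nat (k choose j) * (4*x)^j)"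
    using binom_pm[of "4*x" k] eq by simp
  also have "\<dots> = 2 * (4*x)^k + 2 * (\<Sum>j\<in>J k. of_nat (k choose j) * 4^j * x^j)"
    using nk J_fin by (simp add: power_mult_distrib algebra_simps)
  moreover have "(4::rat)^k = 2^k*2^k" by (simp flip: power_mult_distrib)
  ultimately show ?thesis by (simp add: power_mult_distrib algebra_simps)
qed


lemma S_Suc:
  assumes "k \<ge> 1"
  shows "(of_nat (stern_S k (Suc n)) :: rat) = of_nat (2 ^ k * (2 ^ (k + 1) + 1)) * of_nat (stern_S k n)
     + 2 * (\<Sum>j\<in>J k. of_nat (k choose j) * 4^j * of_nat (stern_S j n))"
proof -
  have fin: "finite (A n)" by (rule A_finite)
  have pos: "\<And>b. b \<in> A n \<Longrightarrow> b \<ge> 1" unfolding A_def by auto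
  have i1: "inj_on (\<lambda>b::nat. 2*b) (A n)" by (auto simp: inj_on_def)
  have i2: "inj_on (\<lambda>b::nat. 4*b+1) (A n)" by (auto simp: inj_on_def)
  have i3: "inj_on (\<lambda>b::nat. 4*b-1) (A n)" using pos by (auto simp: inj_on_def)
  have d1: "(\<lambda>b. 2*b) ` A n \<inter> (\<lambda>b. 4*b+1) ` A n = {}" by auto presburger
  have d2: "((\<lambda>b. 2*b) ` A n \<union> (\<lambda>b. 4*b+1) ` A n) \<inter> (\<lambda>b. 4*b-1) ` A n = {}"
  proof -
    have f: "\<And>a b::nat. a \<ge> 1 \<Longrightarrow> 4*a - 1 \<noteq> 2*b" "\<And>a b::nat. a \<ge> 1 \<Longrightarrow> 4*a-1 \<noteq> 4*b+1" by presburger+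
    have g: "4*a-1 \<noteq> 2*b" "4*a-1 \<noteq> 4*b+1" if "a \<in> A n" for a b using pos[OF that] f by auto
    show ?thesis using g by (auto simp: image_iff)
  qed
  have "(of_nat (stern_S k (Suc n)) :: rat) = (\<Sum>a\<in>A (Suc n). of_nat a ^ k)"
    by (simp add: S_A)
  also have "\<dots> = (\<Sum>a\<in>(\<lambda>b. 2*b) ` A n. of_nat a ^ k) + (\<Sum>a\<in>(\<lambda>b. 4*b+1) ` A n. of_nat a ^ k)
      + (\<Sum>a\<in>(\<lambda>b. 4*b-1) ` A n. of_nat a ^ k)"
    unfolding ASuc using fin d1 d2 by (simp add: sum.union_disjoint)
  also have "\<dots> = (\<Sum>b\<in>A n. (2 * of_nat b)^k + (4 * of_nat b + 1)^k + (4 * of_nat b - 1)^k)"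
  proof -
    have r1: "(\<Sum>a\<in>(\<lambda>b. 2*b) ` A n. of_nat a ^ k) = (\<Sum>b\<in>A n. (2 * of_nat b :: rat)^k)"
      using i1 by (simp add: sum.reindex)
    have r2: "(\<Sum>a\<in>(\<lambda>b. 4*b+1) ` A n. of_nat a ^ k) = (\<Sum>b\<in>A n. (4 * of_nat b + 1 :: rat)^k)"
      using i2 by (simp add: sum.reindex add.commute)
    have "(\<Sum>a\<in>(\<lambda>b. 4*b-1) ` A n. of_nat a ^ k) = (\<Sum>b\<in>A n. (of_nat (4*b-1) :: rat)^k)"
      using i3 by (simp add: sum.reindex)
    also have "\<dots> = (\<Sum>b\<in>A n. (4 * of_nat b - 1 :: rat)^k)"
      by (rule sum.cong[OF refl]) (use pos in \<open>simp add: of_nat_diff\<close>)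
    finally show ?thesis using r1 r2 by (simp add: sum.distrib)
  qed
  also have "\<dots> = (\<Sum>b\<in>A n. of_nat (2 ^ k * (2 ^ (k + 1) + 1)) * of_nat b ^ k
     + 2 * (\<Sum>j\<in>J k. of_nat (k choose j) * 4^j * of_nat b ^ j))"
    by (rule sum.cong[OF refl], rule binom_J[OF assms])
  also have "\<dots> = of_nat (2 ^ k * (2 ^ (k + 1) + 1)) * (\<Sum>b\<in>A n. of_nat b ^ k)
     + 2 * (\<Sum>j\<in>J k. of_nat (k choose j) * 4^j * (\<Sum>b\<in>A n. of_nat b ^ j))"
    apply (simp add: sum.distrib sum_distrib_left[symmetric])
    apply (subst sum.swap)
    apply (simp add: sum_distrib_left mult.assoc)
    done
  finally show ?thesis by (simp add: S_A)
qed


lemma G_nth: "stern_G k $ n = of_nat (stern_S k n)"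
  unfolding stern_G_def by simp

lemma S0: "stern_S k 0 = 1"
  by (simp add: S_A A0)

lemma coef_const: "(of_nat a * 4^j * f :: rat fps) = fps_const (of_nat a * 4^j) * f"
  by (simp add: fps_of_nat[symmetric] fps_numeral_fps_const)

lemma coef_const2: "(of_nat a * fps_X :: rat fps) = fps_const (of_nat a) * fps_X"
  by (simp add: fps_of_nat[symmetric])

theorem mainTheorem9:
  fixes k :: nat
  assumes "1 \<le> k"
  shows "stern_G k =
    (1 + 2 * fps_X * (\<Sum>j\<in>{j. j \<le> k - 1 \<and> j mod 2 = k mod 2}.
                        of_nat (k choose j) * 4 ^ j * stern_G j))
    / (1 - of_nat (2 ^ k * (2 ^ (k + 1) + 1)) * fps_X)"
proof -
  define c :: rat where "c = of_nat (2 ^ k * (2 ^ (k + 1) + 1))"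
  define N :: "rat fps" where "N = 1 + 2 * fps_X * (\<Sum>j\<in>J k. fps_const (of_nat (k choose j) * 4 ^ j) * stern_G j)"
  have D: "(1 - of_nat (2 ^ k * (2 ^ (k + 1) + 1)) * fps_X :: rat fps) = 1 - fps_const c * fps_X"
    unfolding c_def by (simp only: coef_const2)
  have Neq: "(1 + 2 * fps_X * (\<Sum>j\<in>{j. j \<le> k - 1 \<and> j mod 2 = k mod 2}.
                        of_nat (k choose j) * 4 ^ j * stern_G j)) = N"
    unfolding N_def J_def by (simp add: coef_const)
  have DN: "(1 - fps_const c * fps_X) \<noteq> 0"
  proof
    assume "(1 - fps_const c * fps_X) = 0"
    then have "(1 - fps_const c * fps_X) $ 0 = 0" by simp
    then show False by simp
  qed
  have main: "stern_G k * (1 - fps_const c * fps_X) = N"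
  proof (rule fps_ext)
    fix n
    show "(stern_G k * (1 - fps_const c * fps_X)) $ n = N $ n"
    proof (cases n)
      case 0
      then show ?thesis unfolding N_def by (simp add: G_nth S0)
    next
      case (Suc m)
      have "(stern_G k * (1 - fps_const c * fps_X)) $ n = stern_G k $ n - c * stern_G k $ m"
        by (simp add: algebra_simps Suc)
      also have "\<dots> = 2 * (\<Sum>j\<in>J k. of_nat (k choose j) * 4^j * of_nat (stern_S j m))"
        using S_Suc[OF assms, of m] unfolding c_def by (simp add: G_nth Suc)
      also have "\<dots> = N $ n"
        unfolding N_def using Suc by (simp add: fps_sum_nth G_nth fps_numeral_fps_const mult.assoc)
      finally show ?thesis .
    qed
  qed
  show ?thesis unfolding D Neq main[symmetric] using DN by simp
qed

end
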